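(* Let $A\in\mathbb{R}^{n\times n}$, let $s$ be an integer with $1\leq s<d(A)$, and let $v_0\in\mathbb{R}^n$ with $\|v_0\|=1$ and $d(A,v_0)\geq s+1$. Then all vectors of the Arnoldi cross iteration ACI($s$) started at $v_0$ are well defined (i.e. $\widetilde w_k\neq 0$ and $\widetilde v_{k+1}\neq 0$ for all $k$, with $d(A,v_k)\geq s+1$ and $d(A^T,w_k)\geq s+1$), and $$\|\widetilde w_k\|\leq\|\widetilde v_{k+1}\|\leq\|\widetilde w_{k+1}\|\leq\|\widetilde v_{k+2}\|\leq\Phi_s(A^T)=\Phi_s(A),\qquad k=0,1,2,\dots.$$ Moreover, $\|\widetilde w_k\|=\|\widetilde v_{k+1}\|$ holds if and only if $v_k=\alpha v_{k+1}$ for some $\alpha\neq 0$, and $\|\widetilde v_{k+1}\|=\|\widetilde w_{k+1}\|$ holds if and only if $w_k=\beta w_{k+1}$ for some $\beta\neq 0$.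
   Context: Notation: for $A\in\mathbb{R}^{n\times n}$, $d(A)$ is the degree of the minimal polynomial of $A$, $d(A,v)$ is the grade of $v$ w.r.t. $A$ (degree of the monic polynomial $p$ of smallest degree with $p(A)v=0$), $\mathcal{K}_k(A,v)=\mathrm{span}\{v,Av,\dots,A^{k-1}v\}$, $\mathcal{M}_s$ is the set of real monic polynomials of degree $s$, and $\|\cdot\|$ is the Euclidean norm. For a matrix $B$ and a vector $u$ with $d(B,u)\geq s$, let $P_s(\cdot\,;u)_B\in\mathcal{M}_s$ be the unique monic polynomial with $P_s(B;u)u\perp\mathcal{K}_s(B,u)$ (equivalently $P_s(B;u)u\in B^su+\mathcal{K}_s(B,u)$ orthogonal to $\mathcal{K}_s(B,u)$). The Arnoldi cross iteration ACI($s$) started at $v_0$ is: for $k=0,1,2,\dots$: $\widetilde w_k=P_s(A;v_k)v_k$ (polynomial determined with respect to $A$), $w_k=\widetilde w_k/\|\widetilde w_k\|$, $\widetilde v_{k+1}=P_s(A^T;w_k)w_k$ (polynomial determined with respect to $A^T$, so $\widetilde v_{k+1}\perp\mathcal{K}_s(A^T,w_k)$), $v_{k+1}=\widetilde v_{k+1}/\|\widetilde v_{k+1}\|$. Finally $\Phi_s(A):=\max_{v\in\mathbb{R}^n,\|v\|=1}\min_{p\in\mathcal{M}_s}\|p(A)v\|$. *)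

theory Defs
  imports "HOL-Analysis.Analysis" "HOL-Computational_Algebra.Polynomial"
begin

definition polyapp :: "real poly \<Rightarrow> real^'n^'n \<Rightarrow> real^'n \<Rightarrow> real^'n" where
  "polyapp p B u = (\<Sum>i\<le>degree p. coeff p i *\<^sub>R (((\<lambda>x. B *v x) ^^ i) u))"

definition monic_polys :: "nat \<Rightarrow> real poly set" where
  "monic_polys s = {p. degree p = s \<and> lead_coeff p = 1}"

definition minpoly_deg :: "real^'n^'n \<Rightarrow> nat" where
  "minpoly_deg A = (LEAST k. \<exists>p\<in>monic_polys k. \<forall>v. polyapp p A v = 0)"

definition grade :: "real^'n^'n \<Rightarrow> real^'n \<Rightarrow> nat" where
  "grade A v = (LEAST k. \<exists>p\<in>monic_polys k. polyapp p A v = 0)"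

definition krylov :: "nat \<Rightarrow> real^'n^'n \<Rightarrow> real^'n \<Rightarrow> (real^'n) set" where
  "krylov k A v = span {((\<lambda>x. A *v x) ^^ i) v | i. i < k}"

definition arnoldi_poly :: "nat \<Rightarrow> real^'n^'n \<Rightarrow> real^'n \<Rightarrow> real poly" where
  "arnoldi_poly s B u = (THE p. p \<in> monic_polys s \<and>
      (\<forall>y\<in>krylov s B u. inner (polyapp p B u) y = 0))"

definition arnoldi_vec :: "nat \<Rightarrow> real^'n^'n \<Rightarrow> real^'n \<Rightarrow> real^'n" where
  "arnoldi_vec s B u = polyapp (arnoldi_poly s B u) B u"

definition normalize_vec :: "real^'n \<Rightarrow> real^'n" where
  "normalize_vec x = (1 / norm x) *\<^sub>R x"

fun aci_v :: "nat \<Rightarrow> real^'n^'n \<Rightarrow> real^'n \<Rightarrow> nat \<Rightarrow> real^'n" where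
  "aci_v s A v0 0 = v0"
| "aci_v s A v0 (Suc k) =
     (let w = normalize_vec (arnoldi_vec s A (aci_v s A v0 k))
      in normalize_vec (arnoldi_vec s (transpose A) w))"

definition aci_wt :: "nat \<Rightarrow> real^'n^'n \<Rightarrow> real^'n \<Rightarrow> nat \<Rightarrow> real^'n" where
  "aci_wt s A v0 k = arnoldi_vec s A (aci_v s A v0 k)"

definition aci_w :: "nat \<Rightarrow> real^'n^'n \<Rightarrow> real^'n \<Rightarrow> nat \<Rightarrow> real^'n" where
  "aci_w s A v0 k = normalize_vec (aci_wt s A v0 k)"

text \<open>tilde v_(k+1) = P_s(A^T;w_k)w_k  (aci_vt s A v0 k denotes tilde v_(k+1))\<close>
definition aci_vt_next :: "nat \<Rightarrow> real^'n^'n \<Rightarrow> real^'n \<Rightarrow> nat \<Rightarrow> real^'n" where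
  "aci_vt_next s A v0 k = arnoldi_vec s (transpose A) (aci_w s A v0 k)"

definition Phi :: "nat \<Rightarrow> real^'n^'n \<Rightarrow> real" where
  "Phi s A = (SUP v\<in>{v. norm v = 1}. (INF p\<in>monic_polys s. norm (polyapp p A v)))"

end

theory Submission
  imports Defs
begin


abbreviation mv :: "real^'n^'n \<Rightarrow> real^'n \<Rightarrow> real^'n" where "mv B \<equiv> (\<lambda>x. B *v x)"

lemma polyapp_rep:
  assumes "degree p \<le> N"
  shows "polyapp p B u = (\<Sum>i\<le>N. coeff p i *\<^sub>R ((mv B ^^ i) u))"
  unfolding polyapp_def
proof (rule sum.mono_neutral_left)
  show "\<forall>i\<in>{..N} - {..degree p}. coeff p i *\<^sub>R (mv B ^^ i) u = 0"
    by (auto simp: coeff_eq_0)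
qed (use assms in auto)

lemma polyapp_add: "polyapp (p + q) B u = polyapp p B u + polyapp q B u"
proof -
  let ?N = "max (degree p) (degree q)"
  have "degree (p+q) \<le> ?N" by (rule degree_add_le) auto
  then show ?thesis
    by (simp add: polyapp_rep[of _ ?N] scaleR_add_left sum.distrib)
qed

lemma polyapp_diff: "polyapp (p - q) B u = polyapp p B u - polyapp q B u"
proof -
  let ?N = "max (degree p) (degree q)"
  have "degree (p-q) \<le> ?N" by (rule degree_diff_le) auto
  then show ?thesis
    by (simp add: polyapp_rep[of _ ?N] scaleR_diff_left sum_subtractf)
qed

lemma polyapp_smult: "polyapp (smult c p) B u = c *\<^sub>R polyapp p B u"
proof -
  have "polyapp (smult c p) B u = (\<Sum>i\<le>degree p. coeff (smult c p) i *\<^sub>R ((mv B ^^ i) u))"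
    by (rule polyapp_rep) (rule degree_smult_le)
  also have "\<dots> = c *\<^sub>R polyapp p B u"
    by (simp only: polyapp_def coeff_smult scaleR_sum_right scaleR_scaleR)
  finally show ?thesis .
qed

lemma polyapp_zero[simp]: "polyapp 0 B u = 0"
  by (simp add: polyapp_def)

lemma polyapp_monom1: "polyapp (monom 1 k) B u = (mv B ^^ k) u"
proof -
  have "polyapp (monom 1 k) B u = (\<Sum>i\<le>k. coeff (monom 1 k) i *\<^sub>R ((mv B ^^ i) u))"
    by (rule polyapp_rep) (simp add: degree_monom_le)
  also have "\<dots> = (\<Sum>i\<le>k. (if k = i then 1 else 0) *\<^sub>R ((mv B ^^ i) u))"
    by (simp add: coeff_monom)
  also have "\<dots> = (\<Sum>i\<le>k. if i = k then (mv B ^^ k) u else 0)"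
    by (intro sum.cong refl) (simp only: split: if_splits, simp_all)
  also have "\<dots> = (mv B ^^ k) u"
    by (simp only: sum.delta finite_atMost atMost_iff order_refl if_True)
  finally show ?thesis .
qed

lemma mv_sum: fixes B :: "real^'n^'n" shows "B *v (\<Sum>i\<in>I. f i) = (\<Sum>i\<in>I. B *v f i)"
  by (induction I rule: infinite_finite_induct) (auto simp: matrix_vector_right_distrib)

lemma mv_scale: fixes B :: "real^'n^'n" shows "B *v (c *\<^sub>R x) = c *\<^sub>R (B *v x)"
  by (rule matrix_vector_mult_scaleR)

lemma polyapp_pCons: "polyapp (pCons a q) B u = a *\<^sub>R u + B *v polyapp q B u"
proof -
  have "polyapp (pCons a q) B u = (\<Sum>i\<le>Suc (degree q). coeff (pCons a q) i *\<^sub>R ((mv B ^^ i) u))"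
    by (rule polyapp_rep) (simp add: degree_pCons_le)
  also have "\<dots> = a *\<^sub>R u + (\<Sum>i\<le>degree q. coeff q i *\<^sub>R (B *v (mv B ^^ i) u))"
    by (subst sum.atMost_Suc_shift) simp
  also have "\<dots> = a *\<^sub>R u + B *v polyapp q B u"
    by (simp only: polyapp_def mv_sum mv_scale)
  finally show ?thesis .
qed

lemma mv_pow_zero: "(mv B ^^ j) 0 = 0"
  by (induction j) auto

lemma polyapp_monom_mult: "polyapp (monom 1 j * q) B u = (mv B ^^ j) (polyapp q B u)"
proof (induction j)
  case 0 then show ?case by (simp add: monom_0 one_pCons[symmetric])
next
  case (Suc j)
  have "monom 1 (Suc j) * q = pCons 0 (monom 1 j * q)"
    by (simp add: monom_Suc)
  then show ?case using Suc by (simp add: polyapp_pCons)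
qed

lemma inner_mv: fixes B :: "real^'n^'n" shows "inner (B *v x) y = inner x (transpose B *v y)"
proof -
  have "inner x (adjoint (mv B) y) = inner (B *v x) y" by (rule adjoint_works) simp
  then show ?thesis by (simp only: adjoint_matrix)
qed

lemma inner_mv_pow: "inner ((mv B ^^ i) x) y = inner x ((mv (transpose B) ^^ i) y)"
proof (induction i arbitrary: y)
  case 0 then show ?case by simp
next
  case (Suc i)
  have "inner ((mv B ^^ Suc i) x) y = inner ((mv B ^^ i) x) (transpose B *v y)"
    by (simp del: transpose_matrix_vector add: inner_mv)
  also have "\<dots> = inner x ((mv (transpose B) ^^ i) (transpose B *v y))" by (rule Suc)
  also have "\<dots> = inner x ((mv (transpose B) ^^ Suc i) y)" by (simp only: funpow_Suc_right comp_def)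
  finally show ?case .
qed

lemma inner_polyapp: "inner (polyapp p B u) w = inner u (polyapp p (transpose B) w)"
  unfolding polyapp_def inner_sum_left inner_sum_right
  by (intro sum.cong refl) (simp only: inner_scaleR_left inner_scaleR_right inner_mv_pow)



lemma span_idx:
  assumes "y \<in> span {f i | i. i < (s::nat)}"
  shows "\<exists>c. y = (\<Sum>i<s. c i *\<^sub>R f i)"
  using assms
proof (induction s arbitrary: y)
  case 0 then show ?case by simp
next
  case (Suc s)
  have eq: "{f i | i. i < Suc s} = insert (f s) {f i | i. i < s}"
    by (auto simp: less_Suc_eq)
  from Suc.prems obtain k where "y - k *\<^sub>R f s \<in> span {f i | i. i < s}"
    unfolding eq span_breakdown_eq by blast
  then obtain c where c: "y - k *\<^sub>R f s = (\<Sum>i<s. c i *\<^sub>R f i)" using Suc.IH by blast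
  define c' where "c' = c(s := k)"
  have "(\<Sum>i<Suc s. c' i *\<^sub>R f i) = (\<Sum>i<s. c i *\<^sub>R f i) + k *\<^sub>R f s"
    by (simp add: c'_def)
  then show ?case using c by (metis diff_add_cancel)
qed

lemma polyapp_in_krylov:
  assumes "\<forall>i\<ge>s. coeff r i = 0"
  shows "polyapp r B u \<in> krylov s B u"
  unfolding polyapp_def krylov_def
proof (rule span_sum)
  fix i assume "i \<in> {..degree r}"
  show "coeff r i *\<^sub>R (mv B ^^ i) u \<in> span {(mv B ^^ i) u |i. i < s}"
  proof (cases "i < s")
    case True
    then show ?thesis by (intro span_scale span_base) blast
  next
    case False
    then show ?thesis using assms by (simp add: span_zero)
  qed
qed

lemma krylov_polyapp:
  assumes "y \<in> krylov s B u"
  shows "\<exists>r. (\<forall>i\<ge>s. coeff r i = 0) \<and> polyapp r B u = y"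
proof -
  obtain c where c: "y = (\<Sum>i<s. c i *\<^sub>R (mv B ^^ i) u)"
    using span_idx[OF assms[unfolded krylov_def]] by blast
  define r where "r = (\<Sum>i<s. monom (c i) i)"
  have cr: "coeff r j = (if j < s then c j else 0)" for j
    by (simp add: r_def coeff_sum coeff_monom)
  have dr: "degree r \<le> s" by (rule degree_le) (simp add: cr)
  have "polyapp r B u = (\<Sum>i\<le>s. coeff r i *\<^sub>R (mv B ^^ i) u)"
    by (rule polyapp_rep[OF dr])
  also have "\<dots> = (\<Sum>i<s. coeff r i *\<^sub>R (mv B ^^ i) u)"
    by (simp add: lessThan_Suc_atMost[symmetric] cr)
  also have "\<dots> = y" by (simp add: c cr)
  finally show ?thesis using cr by (intro exI[of _ r]) auto
qed

lemma monic_nz: "p \<in> monic_polys d \<Longrightarrow> p \<noteq> 0"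
  by (auto simp: monic_polys_def)

lemma monic_diff:
  assumes "p \<in> monic_polys s" "q \<in> monic_polys s"
  shows "\<forall>i\<ge>s. coeff (p - q) i = 0"
proof (intro allI impI)
  fix i assume "s \<le> i"
  then consider "i = s" | "i > s" by linarith
  then show "coeff (p - q) i = 0"
    using assms by cases (auto simp: monic_polys_def coeff_eq_0)
qed

definition nok :: "nat \<Rightarrow> real^'n^'n \<Rightarrow> real^'n \<Rightarrow> bool" where
  "nok s B u \<longleftrightarrow> (\<forall>d p. d \<le> s \<longrightarrow> p \<in> monic_polys d \<longrightarrow> polyapp p B u \<noteq> 0)"

lemma arnoldi_ex1:
  assumes "nok s B u"
  shows "\<exists>!p. p \<in> monic_polys s \<and> (\<forall>y\<in>krylov s B u. inner (polyapp p B u) y = 0)"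
proof -
  obtain y z where y: "y \<in> span (krylov s B u)" and z: "\<And>w. w \<in> span (krylov s B u) \<Longrightarrow> orthogonal z w"
    and yz: "(mv B ^^ s) u = y + z"
    using orthogonal_subspace_decomp_exists by blast
  have sp: "span (krylov s B u) = krylov s B u" by (simp add: krylov_def)
  obtain r where r: "\<forall>i\<ge>s. coeff r i = 0" "polyapp r B u = y"
    using krylov_polyapp y sp by metis
  define p where "p = monom 1 s - r"
  have cp: "coeff p s = 1" "\<forall>i>s. coeff p i = 0" using r by (auto simp: p_def coeff_monom)
  have "degree p \<le> s" by (rule degree_le) (use cp in auto)
  moreover have "s \<le> degree p" by (rule le_degree) (simp add: cp)
  ultimately have pm: "p \<in> monic_polys s" using cp by (simp add: monic_polys_def)
  have pa: "polyapp p B u = z" using yz r by (simp add: p_def polyapp_diff polyapp_monom1)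
  have ex: "p \<in> monic_polys s \<and> (\<forall>y\<in>krylov s B u. inner (polyapp p B u) y = 0)"
    using pm pa z sp by (simp add: orthogonal_def)
  have uniq: "q = p" if q: "q \<in> monic_polys s \<and> (\<forall>y\<in>krylov s B u. inner (polyapp q B u) y = 0)" for q
  proof -
    define t where "t = q - p"
    have ct: "\<forall>i\<ge>s. coeff t i = 0" using monic_diff q pm t_def by blast
    have tk: "polyapp t B u \<in> krylov s B u" by (rule polyapp_in_krylov[OF ct])
    have "inner (polyapp t B u) (polyapp t B u) = 0"
      using q ex tk by (simp add: t_def polyapp_diff inner_diff_left)
    hence t0: "polyapp t B u = 0" by simp
    show "q = p"
    proof (rule ccontr)
      assume "q \<noteq> p"
      hence tnz: "t \<noteq> 0" by (simp add: t_def)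
      have "degree t < s"
      proof (rule ccontr)
        assume "\<not> degree t < s"
        hence "coeff t (degree t) = 0" using ct by simp
        with tnz show False by simp
      qed
      moreover have "smult (1 / lead_coeff t) t \<in> monic_polys (degree t)"
        using tnz by (simp add: monic_polys_def)
      moreover have "polyapp (smult (1 / lead_coeff t) t) B u = 0"
        by (simp add: polyapp_smult t0)
      ultimately show False using assms unfolding nok_def by (meson less_imp_le)
    qed
  qed
  show ?thesis using ex uniq by blast
qed

lemma arnoldi_props:
  assumes "nok s B u"
  shows "arnoldi_poly s B u \<in> monic_polys s"
    and "\<And>y. y \<in> krylov s B u \<Longrightarrow> inner (arnoldi_vec s B u) y = 0"
  using theI'[OF arnoldi_ex1[OF assms]]
  unfolding arnoldi_poly_def[symmetric] arnoldi_vec_def by auto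

lemma arnoldi_nz: "nok s B u \<Longrightarrow> arnoldi_vec s B u \<noteq> 0"
  using arnoldi_props(1) unfolding nok_def arnoldi_vec_def by blast

lemma arnoldi_inner:
  assumes "nok s B u" "q \<in> monic_polys s" "\<And>y. y \<in> krylov s B u \<Longrightarrow> inner z y = 0"
  shows "inner (polyapp q B u) z = inner (arnoldi_vec s B u) z"
proof -
  have "polyapp q B u - arnoldi_vec s B u \<in> krylov s B u"
    unfolding arnoldi_vec_def polyapp_diff[symmetric]
    by (rule polyapp_in_krylov, rule monic_diff[OF assms(2) arnoldi_props(1)[OF assms(1)]])
  then have "inner (polyapp q B u - arnoldi_vec s B u) z = 0"
    by (metis assms(3) inner_commute)
  then show ?thesis by (simp add: inner_diff_left)
qed

lemma arnoldi_min:
  assumes "nok s B u" "q \<in> monic_polys s"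
  shows "norm (arnoldi_vec s B u) \<le> norm (polyapp q B u)"
proof -
  let ?a = "arnoldi_vec s B u"
  have "inner (polyapp q B u) ?a = inner ?a ?a"
    by (rule arnoldi_inner[OF assms]) (metis arnoldi_props(2)[OF assms(1)] inner_commute)
  hence "norm ?a ^ 2 \<le> norm (polyapp q B u) * norm ?a"
    by (metis norm_cauchy_schwarz power2_norm_eq_inner)
  then show ?thesis
    by (metis (no_types, lifting) mult_le_cancel_right norm_ge_zero power2_eq_square
        nle_le not_less zero_less_norm_iff mult_zero_right)
qed



lemma monic_from_low:
  assumes "\<forall>i\<ge>k. coeff r i = 0"
  shows "monom 1 k - r \<in> monic_polys k"
proof -
  define p where "p = monom 1 k - r"
  have cp: "coeff p k = 1" "\<forall>i>k. coeff p i = 0" using assms by (auto simp: p_def coeff_monom)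
  have "degree p \<le> k" by (rule degree_le) (use cp in auto)
  moreover have "k \<le> degree p" by (rule le_degree) (simp add: cp)
  ultimately show ?thesis using cp by (simp add: monic_polys_def p_def[symmetric])
qed

lemma ann_ex:
  fixes B :: "real^'n^'n"
  shows "\<exists>d p. p \<in> monic_polys d \<and> polyapp p B u = 0"
proof -
  let ?S = "\<lambda>k. {(mv B ^^ i) u | i. i < k}"
  have "\<exists>k. (mv B ^^ k) u \<in> krylov k B u"
  proof (rule ccontr)
    assume H: "\<not> (\<exists>k. (mv B ^^ k) u \<in> krylov k B u)"
    have ind: "independent (?S k) \<and> card (?S k) = k" for k
    proof (induction k)
      case 0 show ?case by (simp add: independent_empty)
    next
      case (Suc k)
      have eq: "?S (Suc k) = insert ((mv B ^^ k) u) (?S k)" by (auto simp: less_Suc_eq)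
      have ns: "(mv B ^^ k) u \<notin> span (?S k)" using H by (simp add: krylov_def)
      have nin: "(mv B ^^ k) u \<notin> ?S k"
      proof
        assume "(mv B ^^ k) u \<in> ?S k"
        then have "(mv B ^^ k) u \<in> span (?S k)" by (rule span_base)
        with ns show False by contradiction
      qed
      have fin: "finite (?S k)" by simp
      show ?case using Suc.IH ns nin fin unfolding eq by (simp add: independent_insert)
    qed
    have "card (?S (Suc DIM(real^'n))) \<le> DIM(real^'n)"
      using independent_bound ind by blast
    then show False using ind[of "Suc DIM(real^'n)"] by linarith
  qed
  then obtain k where "(mv B ^^ k) u \<in> krylov k B u" by blast
  then obtain r where r: "\<forall>i\<ge>k. coeff r i = 0" "polyapp r B u = (mv B ^^ k) u"
    using krylov_polyapp by blast
  have "polyapp (monom 1 k - r) B u = 0" using r by (simp add: polyapp_diff polyapp_monom1)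
  then show ?thesis using monic_from_low[OF r(1)] by blast
qed

lemma grade_nok: "s + 1 \<le> grade B u \<Longrightarrow> nok s B u"
  unfolding nok_def
proof (intro allI impI)
  fix d p assume a: "s + 1 \<le> grade B u" "d \<le> s" "p \<in> monic_polys d"
  show "polyapp p B u \<noteq> 0"
  proof
    assume "polyapp p B u = 0"
    hence "grade B u \<le> d" unfolding grade_def using a(3) by (intro Least_le) blast
    with a show False by linarith
  qed
qed

lemma nok_grade:
  fixes B :: "real^'n^'n"
  assumes "nok s B u" shows "s + 1 \<le> grade B u"
proof (rule ccontr)
  assume "\<not> s + 1 \<le> grade B u"
  moreover have "\<exists>p\<in>monic_polys (grade B u). polyapp p B u = 0"
    unfolding grade_def by (rule LeastI_ex) (use ann_ex in blast)
  moreover obtain p where "p \<in> monic_polys (grade B u)" "polyapp p B u = 0"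
    using calculation(2) by blast
  moreover have "grade B u \<le> s" using calculation(1) by linarith
  ultimately show False using assms unfolding nok_def by blast
qed

lemma kill_raise:
  assumes "p \<in> monic_polys d" "d \<le> s" "polyapp p B u = 0"
  shows "monom 1 (s - d) * p \<in> monic_polys s \<and> polyapp (monom 1 (s - d) * p) B u = 0"
proof -
  have pnz: "p \<noteq> 0" using assms(1) by (rule monic_nz)
  have "degree (monom 1 (s - d) * p) = s"
    using assms(1,2) pnz by (simp add: degree_mult_eq degree_monom_eq monic_polys_def)
  moreover have "lead_coeff (monom 1 (s - d) * p) = 1"
  proof -
    have lc: "lead_coeff p = 1" using assms(1) unfolding monic_polys_def by blast
    show ?thesis unfolding lead_coeff_mult lead_coeff_monom lc by simp
  qed
  ultimately show ?thesis using assms(3)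
    by (simp add: monic_polys_def polyapp_monom_mult mv_pow_zero)
qed

lemma not_nok_kill:
  assumes "\<not> nok s B u"
  obtains q where "q \<in> monic_polys s" "polyapp q B u = 0"
proof -
  from assms obtain d p where dp: "d \<le> s" "p \<in> monic_polys d" "polyapp p B u = 0"
    unfolding nok_def by blast
  show ?thesis using kill_raise[OF dp(2) dp(1) dp(3)] that by blast
qed

lemma norm_normalize: "x \<noteq> 0 \<Longrightarrow> norm (normalize_vec x) = 1"
  by (simp add: normalize_vec_def)

lemma inner_normalize: "inner a (normalize_vec b) = inner a b / norm b"
  by (simp add: normalize_vec_def)

lemma cross:
  fixes B :: "real^'n^'n"
  assumes nk: "nok s B u"
  shows "nok s (transpose B) (normalize_vec (arnoldi_vec s B u))"
    and "norm (arnoldi_vec s B u) = inner u (arnoldi_vec s (transpose B) (normalize_vec (arnoldi_vec s B u)))"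
proof -
  define W where "W = arnoldi_vec s B u"
  define w where "w = normalize_vec W"
  have Wnz: "W \<noteq> 0" using arnoldi_nz[OF nk] W_def by simp
  have worth: "inner w y = 0" if "y \<in> krylov s B u" for y
    using arnoldi_props(2)[OF nk that] by (simp add: w_def W_def normalize_vec_def)
  have Ww: "inner W w = norm W"
    using Wnz by (simp add: w_def normalize_vec_def power2_norm_eq_inner[symmetric] power2_eq_square)
  have key: "inner u (polyapp q (transpose B) w) = norm W" if q: "q \<in> monic_polys s" for q
  proof -
    have "inner u (polyapp q (transpose B) w) = inner (polyapp q B u) w"
      by (rule inner_polyapp[symmetric])
    also have "\<dots> = inner W w"
      unfolding W_def by (rule arnoldi_inner[OF nk q]) (metis worth inner_commute)
    finally show ?thesis using Ww by simp
  qed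
  show nk2: "nok s (transpose B) (normalize_vec (arnoldi_vec s B u))"
  proof (rule ccontr)
    assume "\<not> nok s (transpose B) (normalize_vec (arnoldi_vec s B u))"
    then obtain q where q: "q \<in> monic_polys s" "polyapp q (transpose B) w = 0"
      using not_nok_kill unfolding w_def W_def by blast
    from key[OF q(1)] q(2) Wnz show False by simp
  qed
  show "norm (arnoldi_vec s B u) = inner u (arnoldi_vec s (transpose B) (normalize_vec (arnoldi_vec s B u)))"
    using key[OF arnoldi_props(1)[OF nk2]] unfolding arnoldi_vec_def w_def W_def by simp
qed

abbreviation INFf :: "nat \<Rightarrow> real^'n^'n \<Rightarrow> real^'n \<Rightarrow> real" where
  "INFf s B v \<equiv> (INF p\<in>monic_polys s. norm (polyapp p B v))"

lemma monic_ne: "monic_polys s \<noteq> {}"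
proof -
  have "monom 1 s \<in> monic_polys s" by (simp add: monic_polys_def degree_monom_eq)
  then show ?thesis by blast
qed

lemma inf_nn: "0 \<le> INFf s B v"
  by (rule cINF_greatest[OF monic_ne]) simp

lemma inf_le: "q \<in> monic_polys s \<Longrightarrow> INFf s B v \<le> norm (polyapp q B v)"
  by (rule cINF_lower) (auto intro: bdd_belowI[of _ 0])

lemma inf_eq: "nok s B v \<Longrightarrow> INFf s B v = norm (arnoldi_vec s B v)"
  apply (rule antisym)
   apply (unfold arnoldi_vec_def, rule inf_le, erule arnoldi_props(1))
  apply (rule cINF_greatest[OF monic_ne])
  apply (unfold arnoldi_vec_def[symmetric], erule (1) arnoldi_min)
  done

lemma inf_bound:
  fixes B :: "real^'n^'n"
  shows "\<exists>C. \<forall>v. norm v = 1 \<longrightarrow> INFf s B v \<le> C"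
proof -
  obtain K where K: "K > 0" "\<And>x. norm (B *v x) \<le> K * norm x"
    using linear_bounded_pos[OF matrix_vector_mul_linear] by blast
  have pw: "norm ((mv B ^^ i) x) \<le> K ^ i * norm x" for i x
  proof (induction i)
    case 0 then show ?case by simp
  next
    case (Suc i)
    have "norm ((mv B ^^ Suc i) x) \<le> K * norm ((mv B ^^ i) x)" using K(2) by simp
    also have "\<dots> \<le> K * (K ^ i * norm x)" using Suc K(1) by (simp add: mult_left_mono)
    finally show ?case by simp
  qed
  have "INFf s B v \<le> K ^ s" if "norm v = 1" for v
  proof -
    have "INFf s B v \<le> norm (polyapp (monom 1 s) B v)"
      by (rule inf_le) (simp add: monic_polys_def degree_monom_eq)
    also have "\<dots> \<le> K ^ s" using pw[of s v] that by (simp add: polyapp_monom1)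
    finally show ?thesis .
  qed
  then show ?thesis by blast
qed

lemma phi_ge:
  fixes B :: "real^'n^'n"
  assumes "norm v = 1" shows "INFf s B v \<le> Phi s B"
proof -
  obtain C where C: "\<forall>v. norm v = 1 \<longrightarrow> INFf s B v \<le> C" using inf_bound by blast
  have bdd: "bdd_above ((\<lambda>v. INFf s B v) ` {v. norm v = 1})"
    by (rule bdd_aboveI2[where M=C]) (use C in blast)
  show ?thesis unfolding Phi_def
    by (rule cSUP_upper[OF _ bdd]) (simp add: assms)
qed

lemma phi_nn:
  fixes B :: "real^'n^'n"
  shows "0 \<le> Phi s B"
  using inf_nn[where s=s and B=B and v="axis undefined 1"] phi_ge[where v="axis undefined 1" and s=s and B=B] by simp

lemma phi_le_T:
  fixes B :: "real^'n^'n"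
  shows "Phi s B \<le> Phi s (transpose B)"
proof -
  have "INFf s B v \<le> Phi s (transpose B)" if v: "norm v = 1" for v
  proof (cases "nok s B v")
    case True
    let ?w = "normalize_vec (arnoldi_vec s B v)"
    have nk2: "nok s (transpose B) ?w" by (rule cross(1)[OF True])
    have wn: "norm ?w = 1" by (rule norm_normalize[OF arnoldi_nz[OF True]])
    have "INFf s B v = norm (arnoldi_vec s B v)" by (rule inf_eq[OF True])
    also have "\<dots> = inner v (arnoldi_vec s (transpose B) ?w)" by (rule cross(2)[OF True])
    also have "\<dots> \<le> norm (arnoldi_vec s (transpose B) ?w)"
      using norm_cauchy_schwarz[of v "arnoldi_vec s (transpose B) ?w"] v by simp
    also have "\<dots> = INFf s (transpose B) ?w" by (rule inf_eq[OF nk2, symmetric])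
    also have "\<dots> \<le> Phi s (transpose B)" by (rule phi_ge[OF wn])
    finally show ?thesis .
  next
    case False
    then obtain q where q: "q \<in> monic_polys s" "polyapp q B v = 0" by (rule not_nok_kill)
    have "INFf s B v \<le> 0" using inf_le[OF q(1), of B v] q(2) by simp
    also have "\<dots> \<le> Phi s (transpose B)" by (rule phi_nn)
    finally show ?thesis .
  qed
  moreover have "{v::real^'n. norm v = 1} \<noteq> {}"
    using norm_axis_1[of undefined] by blast
  ultimately show ?thesis unfolding Phi_def[of s B] by (intro cSUP_least) auto
qed

lemma phi_T: fixes B :: "real^'n^'n" shows "Phi s (transpose B) = Phi s B"
  using phi_le_T[of s B] phi_le_T[of s "transpose B"] by simp

lemma eq_crit:
  fixes x y :: "real^'n"
  assumes "norm x = 1" "norm y = 1" "a > 0" "b > 0" "inner x y = a / b"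
  shows "a = b \<longleftrightarrow> (\<exists>\<alpha>. \<alpha> \<noteq> 0 \<and> x = \<alpha> *\<^sub>R y)"
proof
  assume "a = b"
  hence i1: "inner x y = 1" using assms by simp
  have "inner (x - y) (x - y) = 0"
    using i1 assms(1,2) by (simp add: inner_diff_left inner_diff_right inner_commute norm_eq_1)
  hence "x = y" by simp
  then show "\<exists>\<alpha>. \<alpha> \<noteq> 0 \<and> x = \<alpha> *\<^sub>R y" by (intro exI[of _ 1]) simp
next
  assume "\<exists>\<alpha>. \<alpha> \<noteq> 0 \<and> x = \<alpha> *\<^sub>R y"
  then obtain \<alpha> where x: "x = \<alpha> *\<^sub>R y" by blast
  have "\<bar>\<alpha>\<bar> = 1" using assms(1,2) x by simp
  moreover have "inner x y = \<alpha>" using x assms(2) by (simp add: norm_eq_1)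
  moreover have "a / b > 0" using assms by simp
  ultimately have "\<alpha> > 0" "\<bar>\<alpha>\<bar> = 1" "a / b = \<alpha>" using assms(5) by auto
  hence "a / b = 1" by simp
  then show "a = b" using assms by (simp add: divide_eq_1_iff)
qed



lemma aci_inv:
  fixes A :: "real^'n^'n"
  assumes "norm v0 = 1" "nok s A v0"
  shows "nok s A (aci_v s A v0 k) \<and> norm (aci_v s A v0 k) = 1"
proof (induction k)
  case 0 show ?case using assms by simp
next
  case (Suc k)
  let ?v = "aci_v s A v0 k"
  let ?w = "normalize_vec (arnoldi_vec s A ?v)"
  have n1: "nok s (transpose A) ?w" using cross(1) Suc.IH by blast
  have n2: "nok s (transpose (transpose A)) (normalize_vec (arnoldi_vec s (transpose A) ?w))"
    by (rule cross(1)[OF n1])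
  have eq: "aci_v s A v0 (Suc k) = normalize_vec (arnoldi_vec s (transpose A) ?w)"
    by (simp add: Let_def)
  show ?case using n2 eq norm_normalize[OF arnoldi_nz[OF n1]] by simp
qed

lemma aci_facts:
  fixes A :: "real^'n^'n"
  assumes "norm v0 = 1" "nok s A v0"
  shows "nok s A (aci_v s A v0 k)" "norm (aci_v s A v0 k) = 1"
    "nok s (transpose A) (aci_w s A v0 k)" "norm (aci_w s A v0 k) = 1"
    "aci_wt s A v0 k \<noteq> 0" "aci_vt_next s A v0 k \<noteq> 0"
    "aci_v s A v0 (Suc k) = normalize_vec (aci_vt_next s A v0 k)"
    "aci_w s A v0 k = normalize_vec (aci_wt s A v0 k)"
    "norm (aci_wt s A v0 k) = inner (aci_v s A v0 k) (aci_vt_next s A v0 k)"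
    "norm (aci_vt_next s A v0 k) = inner (aci_w s A v0 k) (aci_wt s A v0 (Suc k))"
proof -
  note I = aci_inv[OF assms, of k]
  show n1: "nok s A (aci_v s A v0 k)" "norm (aci_v s A v0 k) = 1" using I by auto
  show n2: "nok s (transpose A) (aci_w s A v0 k)"
    unfolding aci_w_def aci_wt_def by (rule cross(1)[OF n1(1)])
  show wnz: "aci_wt s A v0 k \<noteq> 0" unfolding aci_wt_def by (rule arnoldi_nz[OF n1(1)])
  show "norm (aci_w s A v0 k) = 1" unfolding aci_w_def by (rule norm_normalize[OF wnz])
  show "aci_vt_next s A v0 k \<noteq> 0" unfolding aci_vt_next_def by (rule arnoldi_nz[OF n2])
  show vS: "aci_v s A v0 (Suc k) = normalize_vec (aci_vt_next s A v0 k)"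
    by (simp add: Let_def aci_vt_next_def aci_w_def aci_wt_def)
  show "aci_w s A v0 k = normalize_vec (aci_wt s A v0 k)" by (simp add: aci_w_def)
  show "norm (aci_wt s A v0 k) = inner (aci_v s A v0 k) (aci_vt_next s A v0 k)"
    unfolding aci_vt_next_def aci_w_def aci_wt_def by (rule cross(2)[OF n1(1)])
  have "norm (aci_vt_next s A v0 k) = inner (aci_w s A v0 k)
      (arnoldi_vec s (transpose (transpose A)) (normalize_vec (aci_vt_next s A v0 k)))"
    unfolding aci_vt_next_def by (rule cross(2)[OF n2])
  also have "\<dots> = inner (aci_w s A v0 k) (aci_wt s A v0 (Suc k))"
    using vS by (simp add: aci_wt_def)
  finally show "norm (aci_vt_next s A v0 k) = inner (aci_w s A v0 k) (aci_wt s A v0 (Suc k))" .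
qed

lemma le_by_inner: "norm (x::real^'n) = 1 \<Longrightarrow> a = inner x y \<Longrightarrow> a \<le> norm y"
  using norm_cauchy_schwarz[of x y] by simp

theorem theorem3p3:
  fixes A :: "real^'n^'n" and v0 :: "real^'n" and s :: nat
  assumes "1 \<le> s" and "s < minpoly_deg A"
    and "norm v0 = 1" and "grade A v0 \<ge> s + 1"
  shows "(\<forall>k. aci_wt s A v0 k \<noteq> 0 \<and> aci_vt_next s A v0 k \<noteq> 0 \<and>
             grade A (aci_v s A v0 k) \<ge> s + 1 \<and>
             grade (transpose A) (aci_w s A v0 k) \<ge> s + 1) \<and>
        (\<forall>k. norm (aci_wt s A v0 k) \<le> norm (aci_vt_next s A v0 k) \<and>
             norm (aci_vt_next s A v0 k) \<le> norm (aci_wt s A v0 (Suc k)) \<and>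
             norm (aci_wt s A v0 (Suc k)) \<le> norm (aci_vt_next s A v0 (Suc k)) \<and>
             norm (aci_vt_next s A v0 (Suc k)) \<le> Phi s (transpose A)) \<and>
        Phi s (transpose A) = Phi s A \<and>
        (\<forall>k. norm (aci_wt s A v0 k) = norm (aci_vt_next s A v0 k) \<longleftrightarrow>
             (\<exists>\<alpha>. \<alpha> \<noteq> 0 \<and> aci_v s A v0 k = \<alpha> *\<^sub>R aci_v s A v0 (Suc k))) \<and>
        (\<forall>k. norm (aci_vt_next s A v0 k) = norm (aci_wt s A v0 (Suc k)) \<longleftrightarrow>
             (\<exists>\<beta>. \<beta> \<noteq> 0 \<and> aci_w s A v0 k = \<beta> *\<^sub>R aci_w s A v0 (Suc k)))"
proof -
  have nk0: "nok s A v0" by (rule grade_nok[OF assms(4)])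
  note F = aci_facts[OF assms(3) nk0]
  have P1: "aci_wt s A v0 k \<noteq> 0 \<and> aci_vt_next s A v0 k \<noteq> 0 \<and>
             grade A (aci_v s A v0 k) \<ge> s + 1 \<and>
             grade (transpose A) (aci_w s A v0 k) \<ge> s + 1" for k
    using F(5,6)[of k] nok_grade[OF F(1)[of k]] nok_grade[OF F(3)[of k]] by blast
  have L1: "norm (aci_wt s A v0 k) \<le> norm (aci_vt_next s A v0 k)" for k
    by (rule le_by_inner[OF F(2) F(9)])
  have L2: "norm (aci_vt_next s A v0 k) \<le> norm (aci_wt s A v0 (Suc k))" for k
    by (rule le_by_inner[OF F(4) F(10)])
  have L3: "norm (aci_vt_next s A v0 k) \<le> Phi s (transpose A)" for k
  proof -
    have "norm (aci_vt_next s A v0 k) = INFf s (transpose A) (aci_w s A v0 k)"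
      unfolding aci_vt_next_def by (rule inf_eq[OF F(3), symmetric])
    also have "\<dots> \<le> Phi s (transpose A)" by (rule phi_ge[OF F(4)])
    finally show ?thesis .
  qed
  have E1: "norm (aci_wt s A v0 k) = norm (aci_vt_next s A v0 k) \<longleftrightarrow>
             (\<exists>\<alpha>. \<alpha> \<noteq> 0 \<and> aci_v s A v0 k = \<alpha> *\<^sub>R aci_v s A v0 (Suc k))" for k
  proof (rule eq_crit)
    show "norm (aci_v s A v0 k) = 1" by (rule F(2))
    show "norm (aci_v s A v0 (Suc k)) = 1" by (rule F(2))
    show "0 < norm (aci_wt s A v0 k)" using F(5) by simp
    show "0 < norm (aci_vt_next s A v0 k)" using F(6) by simp
    show "inner (aci_v s A v0 k) (aci_v s A v0 (Suc k)) = norm (aci_wt s A v0 k) / norm (aci_vt_next s A v0 k)"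
      unfolding F(7) inner_normalize F(9) ..
  qed
  have E2: "norm (aci_vt_next s A v0 k) = norm (aci_wt s A v0 (Suc k)) \<longleftrightarrow>
             (\<exists>\<beta>. \<beta> \<noteq> 0 \<and> aci_w s A v0 k = \<beta> *\<^sub>R aci_w s A v0 (Suc k))" for k
  proof (rule eq_crit)
    show "norm (aci_w s A v0 k) = 1" by (rule F(4))
    show "norm (aci_w s A v0 (Suc k)) = 1" by (rule F(4))
    show "0 < norm (aci_vt_next s A v0 k)" using F(6) by simp
    show "0 < norm (aci_wt s A v0 (Suc k))" using F(5) by simp
    show "inner (aci_w s A v0 k) (aci_w s A v0 (Suc k)) = norm (aci_vt_next s A v0 k) / norm (aci_wt s A v0 (Suc k))"
      unfolding F(8)[of "Suc k"] inner_normalize F(10) ..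
  qed
  show ?thesis using P1 L1 L2 L3 E1 E2 phi_T[of s A] by blast
qed


end
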